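(* Let $L>1$ and let $\mathbf{r}:[0,L]\to\mathbb{R}^2$, $\mathbf{r}(s)=[x(s),y(s)]^T$, be a smooth curve parametrized by arclength $s$ (so $|\dot{\mathbf r}(s)|=1$, where $\dot{()}=d/ds$), with $\mathbf{r}(0)=[0,0]^T$ and $\mathbf{r}(L)=[1,0]^T$. If there is no $s^\star\in[0,L]$ with $\dot{\mathbf{r}}(s^\star)=[1,0]^T$, then $\mathbf{r}$ is self-intersecting. *)

theory Defs
  imports "HOL-Analysis.Analysis"
begin

definition smooth_curve_on :: "real \<Rightarrow> real \<Rightarrow> (real \<Rightarrow> 'a::real_normed_vector) \<Rightarrow> bool" where
  "smooth_curve_on a b r \<longleftrightarrow>
     (\<exists>D :: nat \<Rightarrow> real \<Rightarrow> 'a. D 0 = r \<and>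
        (\<forall>n. \<forall>s\<in>{a..b}. (D n has_vector_derivative D (Suc n) s) (at s within {a..b})))"

end

theory Submission
  imports Defs
begin

lemma sin_stays:
  fixes k :: "real \<Rightarrow> real"
  assumes ck: "continuous_on {a..b} k" and a0: "a0 \<in> {a..b}" and k0: "k a0 = 0"
    and sn: "\<And>x. x \<in> {a..b} \<Longrightarrow> 0 \<le> sin (k x)" and x: "x \<in> {a..b}"
  shows "0 \<le> k x \<and> k x \<le> pi"
proof -
  have conn: "connected (k ` {a..b})" by (rule connected_continuous_image[OF ck]) simp
  have img: "\<exists>u\<in>{a..b}. k u = w" if "y \<in> {a..b}" "z \<in> {a..b}" "k y \<le> w" "w \<le> k z" for w y z
  proof -
    have "w \<in> k ` {a..b}"
      using connectedD_interval[OF conn, of "k y" "k z" w] that by blast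
    then show ?thesis by blast
  qed
  show ?thesis
  proof (rule ccontr)
    assume "\<not> ?thesis"
    then consider "k x < 0" | "k x > pi" by linarith
    then show False
    proof cases
      case 1
      show False
      proof (cases "k x \<le> -(pi/2)")
        case True
        then obtain u where u: "u\<in>{a..b}" "k u = -(pi/2)" using img[OF x a0] k0 by force
        then have "sin (k u) = -1" by simp
        with sn[OF u(1)] show False by simp
      next
        case False
        have "0 < sin (- k x)" using 1 False pi_gt_zero by (intro sin_gt_zero) linarith+
        with sn[OF x] show False by simp
      qed
    next
      case 2
      show False
      proof (cases "k x \<ge> pi/2 + pi")
        case True
        then obtain u where u: "u\<in>{a..b}" "k u = pi/2 + pi" using img[OF a0 x] k0 pi_gt_zero
          by (metis add_nonneg_nonneg less_eq_real_def pi_half_gt_zero)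
        then have "sin (k u) = -1" by (simp only: u(2) sin_add) simp
        with sn[OF u(1)] show False by simp
      next
        case False
        have "0 < sin (k x - pi)" using 2 False by (intro sin_gt_zero) linarith+
        with sn[OF x] show False by (simp add: sin_diff)
      qed
    qed
  qed
qed

lemma core:
  fixes p q :: "real \<Rightarrow> complex" and a b :: real
  assumes ab: "a < b"
    and der: "\<And>s. s \<in> {a..b} \<Longrightarrow> (p has_vector_derivative q s) (at s within {a..b})"
    and cq: "continuous_on {a..b} q"
    and qnz: "\<And>s. s \<in> {a..b} \<Longrightarrow> q s \<noteq> 0"
    and inj: "inj_on p {a..b}"
    and pa: "Im (p a) = 0" and pb: "Im (p b) = 0" and abre: "Re (p a) < Re (p b)"
    and up: "\<And>s. s \<in> {a..b} \<Longrightarrow> 0 \<le> Im (p s)"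
  shows "\<exists>s\<in>{a..b}. Im (q s) = 0 \<and> 0 < Re (q s)"
proof -
  define T where "T = {z::real\<times>real. a \<le> fst z \<and> fst z \<le> snd z \<and> snd z \<le> b}"
  define F where "F z = (if fst z = snd z then q (fst z)
      else (p (snd z) - p (fst z)) / of_real (snd z - fst z))" for z
  have cp: "continuous_on {a..b} p"
    unfolding continuous_on_eq_continuous_within using der has_vector_derivative_continuous by blast
  have convT: "convex T"
    unfolding convex_def
  proof (intro ballI allI impI)
    fix x y :: "real \<times> real" and u v :: real
    assume x: "x \<in> T" and y: "y \<in> T" and uv: "0 \<le> u" "0 \<le> v" "u + v = 1"
    have 1: "a = u * a + v * a" using uv by (metis distrib_right mult_1)
    have 2: "b = u * b + v * b" using uv by (metis distrib_right mult_1)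
    have "u * a + v * a \<le> u * fst x + v * fst y"
      using x y uv by (intro add_mono mult_left_mono) (auto simp: T_def)
    moreover have "u * fst x + v * fst y \<le> u * snd x + v * snd y"
      using x y uv by (intro add_mono mult_left_mono) (auto simp: T_def)
    moreover have "u * snd x + v * snd y \<le> u * b + v * b"
      using x y uv by (intro add_mono mult_left_mono) (auto simp: T_def)
    ultimately show "u *\<^sub>R x + v *\<^sub>R y \<in> T"
      using 1 2 by (simp add: T_def)
  qed
  have Fnz: "F z \<noteq> 0" if "z \<in> T" for z
  proof (cases "fst z = snd z")
    case True
    then show ?thesis using that qnz by (auto simp: F_def T_def)
  next
    case False
    then have "p (snd z) \<noteq> p (fst z)"
      using that inj unfolding inj_on_def T_def by force
    then show ?thesis using False by (simp add: F_def)
  qed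
  have contF: "continuous_on T F"
    unfolding continuous_on_eq_continuous_within
  proof
    fix x assume xT: "x \<in> T"
    obtain s0 t0 where x: "x = (s0,t0)" by fastforce
    show "continuous (at x within T) F"
    proof (cases "s0 = t0")
      case False
      with xT x have lt: "s0 < t0" by (auto simp: T_def)
      define T' where "T' = T \<inter> {z. fst z < snd z}"
      have c1: "continuous_on T' (\<lambda>z. p (snd z))"
        by (rule continuous_on_compose2[OF cp continuous_on_snd]) (auto simp: T'_def T_def)
      have c2: "continuous_on T' (\<lambda>z. p (fst z))"
        by (rule continuous_on_compose2[OF cp continuous_on_fst]) (auto simp: T'_def T_def)
      have "continuous_on T' (\<lambda>z. (p (snd z) - p (fst z)) / of_real (snd z - fst z))"
        by (intro continuous_intros c1 c2) (auto simp: T'_def)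
      then have "continuous_on T' F"
        by (rule continuous_on_eq) (auto simp: T'_def F_def)
      moreover have "x \<in> T'" using xT x lt by (simp add: T'_def)
      ultimately have "continuous (at x within T') F"
        by (simp add: continuous_on_eq_continuous_within)
      moreover have "eventually (\<lambda>z. z \<in> T' \<longleftrightarrow> z \<in> T) (at x)"
        unfolding eventually_at
      proof (intro exI[of _ "(t0 - s0)/2"] conjI ballI impI)
        show "0 < (t0 - s0)/2" using lt by simp
        fix z assume "z \<in> UNIV" "z \<noteq> x \<and> dist z x < (t0 - s0) / 2"
        then have "dist (fst z) s0 < (t0 - s0)/2" "dist (snd z) t0 < (t0 - s0)/2"
          using dist_fst_le[of z x] dist_snd_le[of z x] x by auto
        then have "fst z < snd z" unfolding dist_real_def abs_less_iff by (smt (verit) field_sum_of_halves)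
        then show "(z \<in> T') = (z \<in> T)" by (simp add: T'_def)
      qed
      ultimately show ?thesis
        unfolding continuous_within using Lim_transform_within_set by blast
    next
      case True
      have s0: "s0 \<in> {a..b}" using xT x by (auto simp: T_def)
      have Fx: "F x = q s0" using True x by (simp add: F_def)
      show ?thesis
        unfolding continuous_within_eps_delta
      proof (intro allI impI)
        fix e :: real assume e: "0 < e"
        have "continuous (at s0 within {a..b}) q" using cq s0
          by (simp add: continuous_on_eq_continuous_within)
        then obtain d where d: "0 < d"
          and dq: "\<And>\<xi>. \<xi> \<in> {a..b} \<Longrightarrow> dist \<xi> s0 < d \<Longrightarrow> dist (q \<xi>) (q s0) < e/4"
          unfolding continuous_within_eps_delta using e
          by (metis divide_pos_pos zero_less_numeral)
        show "\<exists>d>0. \<forall>x'\<in>T. dist x' x < d \<longrightarrow> dist (F x') (F x) < e"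
        proof (intro exI[of _ d] conjI ballI impI)
          show "0 < d" by (rule d)
          fix z assume zT: "z \<in> T" and dz: "dist z x < d"
          obtain s t where z: "z = (s,t)" by fastforce
          have ds: "dist s s0 < d" and dt: "dist t s0 < d"
            using dist_fst_le[of z x] dist_snd_le[of z x] dz z x True by auto
          have st: "a \<le> s" "s \<le> t" "t \<le> b" using zT z by (auto simp: T_def)
          show "dist (F z) (F x) < e"
          proof (cases "s = t")
            case True
            then have "F z = q s" using z by (simp add: F_def)
            then show ?thesis using dq[of s] st ds Fx e by simp
          next
            case False
            with st have st': "s < t" by simp
            have inI: "\<xi> \<in> {a..b}" "dist \<xi> s0 < d" if "\<xi> \<in> {s..t}" for \<xi>
              using that st ds dt by (auto simp: dist_real_def abs_less_iff)
            have B: "norm (q \<xi> - q s) \<le> e/2" if "\<xi> \<in> {s..t}" for \<xi>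
            proof -
              have "norm (q \<xi> - q s) \<le> norm (q \<xi> - q s0) + norm (q s0 - q s)"
                by (rule norm_diff_triangle_le[of _ "q s0"]) simp_all
              also have "\<dots> \<le> e/4 + e/4"
                using dq[OF inI[OF that]] dq[of s] st st' ds
                by (intro add_mono) (auto simp: dist_norm norm_minus_commute less_imp_le)
              finally show ?thesis by simp
            qed
            have derst: "(p has_vector_derivative q \<xi>) (at \<xi> within {s..t})" if "\<xi> \<in> {s..t}" for \<xi>
              using has_vector_derivative_within_subset[OF der[OF inI(1)[OF that]], of "{s..t}"] st
              by auto
            have bnd: "norm (p t - p s - (t - s) *\<^sub>R q s) \<le> norm (t - s) * (e/2)"
              by (rule vector_differentiable_bound_linearization[where S="{s..t}" and ?x0.0=s])
                 (use st' derst B in \<open>auto simp: closed_segment_eq_real_ivl\<close>)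
            have Fz: "F z - q s = (p t - p s - (t - s) *\<^sub>R q s) / of_real (t - s)"
              using st' z by (simp add: F_def scaleR_conv_of_real field_simps)
            have nts: "cmod (complex_of_real t - complex_of_real s) = t - s"
              using st' by (metis of_real_diff norm_of_real abs_of_pos diff_gt_0_iff_gt)
            have "norm (F z - q s) \<le> e/2"
              using bnd st' nts by (simp add: Fz norm_divide divide_le_eq mult.commute)
            moreover have "norm (q s - q s0) < e/4"
              using dq[of s] st ds by (simp add: dist_norm)
            ultimately have "norm (F z - q s0) < e"
              using norm_triangle_ineq[of "F z - q s" "q s - q s0"] e by simp
            then show ?thesis using Fx by (simp add: dist_norm)
          qed
        qed
      qed
    qed
  qed

  obtain g where cg: "continuous_on T g" and Fg: "\<And>z. z \<in> T \<Longrightarrow> F z = exp (g z)"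
    using continuous_logarithm_on_contractible[OF contF convex_imp_contractible[OF convT]] Fnz
    by blast
  define c where "c = F (a,b)"
  have abT: "(a,b) \<in> T" using ab by (simp add: T_def)
  have c: "c = (p b - p a) / of_real (b - a)" using ab by (simp add: c_def F_def)
  have Imc: "Im c = 0" using pa pb by (simp add: c Im_divide_of_real)
  have Rec: "0 < Re c" using abre ab by (simp add: c Re_divide_of_real)
  define h where "h z = Im (g z - g (a,b))" for z
  have Fc: "F z = c * exp (g z - g (a,b))" if "z \<in> T" for z
    using Fg[OF that] Fg[OF abT] by (simp add: c_def exp_diff)
  have ImF: "Im (F z) = Re c * (exp (Re (g z - g (a,b))) * sin (h z))" if "z \<in> T" for z
    using Imc by (simp add: Fc[OF that] h_def Im_exp)
  have ReF: "Re (F z) = Re c * (exp (Re (g z - g (a,b))) * cos (h z))" if "z \<in> T" for z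
    using Imc by (simp add: Fc[OF that] h_def Re_exp)
  have sinpos: "0 \<le> sin (h z)" if "z \<in> T" "0 \<le> Im (F z)" for z
    using that ImF[OF that(1)] Rec by (simp add: zero_le_mult_iff)
  have sinneg: "sin (h z) \<le> 0" if "z \<in> T" "Im (F z) \<le> 0" for z
    using that ImF[OF that(1)] Rec by (simp add: mult_le_0_iff)
  have ch: "continuous_on T h" unfolding h_def by (intro continuous_intros cg)
  have hab: "h (a,b) = 0" by (simp add: h_def)
  have cF1: "continuous_on {a..b} (\<lambda>t. F (a,t))"
    by (rule continuous_on_compose2[OF contF]) (auto intro!: continuous_intros simp: T_def)
  have cF2: "continuous_on {a..b} (\<lambda>t. F (t,b))"
    by (rule continuous_on_compose2[OF contF]) (auto intro!: continuous_intros simp: T_def)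
  have ImA: "0 \<le> Im (F (a,t))" if "t \<in> {a..b}" for t
  proof -
    have "0 \<le> Im (F (a,t))" if "t \<in> {a<..b}" for t
      using that up[of t] pa by (simp add: F_def Im_divide_of_real)
    moreover have "continuous_on (closure {a<..b}) (\<lambda>t. Im (F (a,t)))"
      using ab cF1 by (simp add: continuous_on_Im)
    ultimately show ?thesis
      using continuous_ge_on_closure[of "{a<..b}" "\<lambda>t. Im (F (a,t))" t 0] \<open>t \<in> {a..b}\<close> ab
      by simp
  qed
  have ImB: "Im (F (t,b)) \<le> 0" if "t \<in> {a..b}" for t
  proof -
    have "Im (F (t,b)) \<le> 0" if "t \<in> {a..<b}" for t
      using that up[of t] pb by (simp add: F_def Im_divide_of_real divide_nonpos_pos)
    moreover have "continuous_on (closure {a..<b}) (\<lambda>t. Im (F (t,b)))"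
      using ab cF2 by (simp add: continuous_on_Im)
    ultimately show ?thesis
      using continuous_le_on_closure[of "{a..<b}" "\<lambda>t. Im (F (t,b))" t 0] \<open>t \<in> {a..b}\<close> ab
      by simp
  qed
  have ck1: "continuous_on {a..b} (\<lambda>t. h (a,t))"
    by (rule continuous_on_compose2[OF ch]) (auto intro!: continuous_intros simp: T_def)
  have ck2: "continuous_on {a..b} (\<lambda>t. - h (t,b))"
    by (intro continuous_intros continuous_on_compose2[OF ch]) (auto intro!: continuous_intros simp: T_def)
  have haa: "0 \<le> h (a,a)"
    using sin_stays[OF ck1, of b a] hab ab sinpos ImA by (auto simp: T_def)
  have hbb: "h (b,b) \<le> 0"
  proof -
    have "0 \<le> - h (b,b) \<and> - h (b,b) \<le> pi"
      by (rule sin_stays[OF ck2, of a b]) (use hab ab sinneg ImB in \<open>auto simp: T_def\<close>)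
    then show ?thesis by simp
  qed
  have cd: "continuous_on {a..b} (\<lambda>t. h (t,t))"
    by (rule continuous_on_compose2[OF ch]) (auto intro!: continuous_intros simp: T_def)
  obtain s where s: "a \<le> s" "s \<le> b" "h (s,s) = 0"
    using IVT2'[of "\<lambda>t. h (t,t)" b 0 a] haa hbb ab cd by auto
  have sT: "(s,s) \<in> T" using s by (simp add: T_def)
  have "F (s,s) = q s" by (simp add: F_def)
  then have "Im (q s) = 0 \<and> 0 < Re (q s)"
    using ImF[OF sT] ReF[OF sT] s Rec by simp
  then show ?thesis using s by auto
qed

lemma reduce:
  fixes p q :: "real \<Rightarrow> complex" and L :: real
  assumes L: "0 < L"
    and der: "\<And>s. s \<in> {0..L} \<Longrightarrow> (p has_vector_derivative q s) (at s within {0..L})"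
    and cq: "continuous_on {0..L} q"
    and qnz: "\<And>s. s \<in> {0..L} \<Longrightarrow> q s \<noteq> 0"
    and inj: "inj_on p {0..L}"
    and p0: "p 0 = 0" and pL: "p L = 1"
    and nohit: "\<And>s. s \<in> {0..L} \<Longrightarrow> \<not> (Im (q s) = 0 \<and> 0 < Re (q s))"
  shows False
proof -
  have cp: "continuous_on {0..L} p"
    unfolding continuous_on_eq_continuous_within using der has_vector_derivative_continuous by blast
  define U where "U = {s\<in>{0..L}. Im (p s) = 0 \<and> Re (p s) \<le> 0}"
  have "closed ({0..L} \<inter> (\<lambda>s. (Im (p s), Re (p s))) -` ({0} \<times> {..0}))"
  proof (rule continuous_closed_preimage)
    show "continuous_on {0..L} (\<lambda>s. (Im (p s), Re (p s)))" by (intro continuous_intros cp)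
    show "closed {0..L}" by simp
    show "closed ({0::real} \<times> {..0::real})" by (intro closed_Times) simp_all
  qed
  moreover have "{0..L} \<inter> (\<lambda>s. (Im (p s), Re (p s))) -` ({0} \<times> {..0}) = U"
    by (auto simp: U_def)
  ultimately have clU: "closed U" by simp
  have U0: "0 \<in> U" using L p0 by (simp add: U_def)
  have bdU: "bdd_above U" by (rule bdd_aboveI[of _ L]) (auto simp: U_def)
  define u where "u = Sup U"
  have uU: "u \<in> U" unfolding u_def using closed_contains_Sup[OF _ bdU clU] U0 by blast
  have ub: "s \<le> u" if "s \<in> U" for s unfolding u_def using cSup_upper[OF that bdU] .
  have u0L: "u \<in> {0..L}" and Imu: "Im (p u) = 0" and Reu: "Re (p u) \<le> 0" using uU by (auto simp: U_def)
  have uL: "u < L" using u0L Reu pL by (cases "u = L") auto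
  have "\<exists>\<delta>>0. \<forall>s\<in>{0..L}. u < s \<and> s < u + \<delta> \<longrightarrow> Im (p s) \<noteq> 0"
  proof -
    have lin: "\<forall>\<epsilon>>0. \<exists>d>0. \<forall>y\<in>{0..L}. norm (y - u) < d \<longrightarrow>
        norm (p y - p u - (y - u) *\<^sub>R q u) \<le> \<epsilon> * norm (y - u)"
      using der[OF u0L] unfolding has_vector_derivative_def has_derivative_within_alt by blast
    show ?thesis
    proof (cases "Im (q u) = 0")
      case False
      then obtain d where d: "d > 0" and dd: "\<And>y. y\<in>{0..L} \<Longrightarrow> norm (y - u) < d \<Longrightarrow>
          norm (p y - p u - (y - u) *\<^sub>R q u) \<le> (\<bar>Im (q u)\<bar>/2) * norm (y - u)"
        using lin by (metis divide_pos_pos zero_less_abs_iff zero_less_numeral)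
      show ?thesis
      proof (intro exI[of _ d] conjI ballI impI d)
        fix s assume s: "s \<in> {0..L}" "u < s \<and> s < u + d"
        show "Im (p s) \<noteq> 0"
        proof
          assume z: "Im (p s) = 0"
          have "\<bar>Im (p s - p u - (s - u) *\<^sub>R q u)\<bar> \<le> norm (p s - p u - (s - u) *\<^sub>R q u)"
            by (rule abs_Im_le_cmod)
          also have "\<dots> \<le> (\<bar>Im (q u)\<bar>/2) * norm (s - u)" using dd[OF s(1)] s by simp
          finally have "(s - u) * \<bar>Im (q u)\<bar> \<le> (\<bar>Im (q u)\<bar>/2) * (s - u)"
            using z Imu s by (simp add: abs_mult)
          then show False using s False by (simp add: field_simps)
        qed
      qed
    next
      case True
      have "Re (q u) \<noteq> 0"
      proof
        assume "Re (q u) = 0"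
        then have "q u = 0" using True by (simp add: complex_eq_iff)
        then show False using qnz[OF u0L] by simp
      qed
      then have Req: "Re (q u) < 0" using True nohit[OF u0L] by linarith
      then obtain d where d: "d > 0" and dd: "\<And>y. y\<in>{0..L} \<Longrightarrow> norm (y - u) < d \<Longrightarrow>
          norm (p y - p u - (y - u) *\<^sub>R q u) \<le> (- Re (q u)/2) * norm (y - u)"
        using lin by (metis divide_pos_pos neg_0_less_iff_less zero_less_numeral)
      show ?thesis
      proof (intro exI[of _ d] conjI ballI impI d)
        fix s assume s: "s \<in> {0..L}" "u < s \<and> s < u + d"
        show "Im (p s) \<noteq> 0"
        proof
          assume z: "Im (p s) = 0"
          have "Re (p s - p u - (s - u) *\<^sub>R q u) \<le> norm (p s - p u - (s - u) *\<^sub>R q u)"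
            by (rule complex_Re_le_cmod)
          also have "\<dots> \<le> (- Re (q u)/2) * norm (s - u)" using dd[OF s(1)] s by simp
          finally have "Re (p s) - Re (p u) - (s - u) * Re (q u) \<le> (- Re (q u)/2) * (s - u)"
            using s by simp
          moreover have "(s - u) * Re (q u) < 0" using s Req by (simp add: mult_pos_neg)
          ultimately have "Re (p s) < Re (p u)" by (simp add: field_simps)
          then have "s \<in> U" using z Reu s by (simp add: U_def)
          then show False using ub s by force
        qed
      qed
    qed
  qed
  then obtain d where d: "d > 0" and nz1: "\<And>s. s\<in>{0..L} \<Longrightarrow> u < s \<Longrightarrow> s < u + d \<Longrightarrow> Im (p s) \<noteq> 0"
    by blast
  define e where "e = min (d/2) (L - u)"
  have e: "0 < e" "e < d" "u + e \<le> L" using d uL by (auto simp: e_def)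
  define V where "V = {s\<in>{u+e..L}. Im (p s) = 0}"
  have "closed ({u+e..L} \<inter> (\<lambda>s. Im (p s)) -` {0})"
  proof (rule continuous_closed_preimage)
    show "continuous_on {u+e..L} (\<lambda>s. Im (p s))"
      by (rule continuous_on_Im[OF continuous_on_subset[OF cp]]) (use u0L e in auto)
  qed simp_all
  moreover have "{u+e..L} \<inter> (\<lambda>s. Im (p s)) -` {0} = V" by (auto simp: V_def)
  ultimately have clV: "closed V" by simp
  have VL: "L \<in> V" using e pL by (simp add: V_def)
  have bdV: "bdd_below V" by (rule bdd_belowI[of _ "u+e"]) (auto simp: V_def)
  define b where "b = Inf V"
  have bV: "b \<in> V" unfolding b_def using closed_contains_Inf[OF _ bdV clV] VL by blast
  have lb: "b \<le> s" if "s \<in> V" for s unfolding b_def using cInf_lower[OF that bdV] .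
  have ub_b: "b \<le> L" and ueb: "u + e \<le> b" and Imb: "Im (p b) = 0" using bV by (auto simp: V_def)
  have ublt: "u < b" using ueb e by simp
  have b0L: "b \<in> {0..L}" using ub_b ublt u0L by auto
  have nz: "Im (p s) \<noteq> 0" if "u < s" "s < b" for s
  proof (cases "s < u + d")
    case True
    then show ?thesis using nz1[of s] that u0L ub_b by auto
  next
    case False
    then have "s \<in> {u+e..L}" using e that ub_b by auto
    then show ?thesis using lb[of s] that by (auto simp: V_def)
  qed
  have Reb: "0 < Re (p b)"
  proof (rule ccontr)
    assume "\<not> 0 < Re (p b)"
    then have "b \<in> U" using b0L Imb by (simp add: U_def)
    then show False using ub ublt by force
  qed
  have sub: "{u..b} \<subseteq> {0..L}" using u0L ub_b by auto
  have derub: "\<And>s. s \<in> {u..b} \<Longrightarrow> (p has_vector_derivative q s) (at s within {u..b})"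
    using der sub by (meson has_vector_derivative_within_subset subsetD)
  have cqub: "continuous_on {u..b} q" using cq sub by (rule continuous_on_subset)
  have cpub: "continuous_on {u..b} p" using cp sub by (rule continuous_on_subset)
  have injub: "inj_on p {u..b}" using inj sub by (rule inj_on_subset)
  have qnzub: "\<And>s. s \<in> {u..b} \<Longrightarrow> q s \<noteq> 0" using qnz sub by auto
  have sign: "(\<forall>s\<in>{u..b}. 0 \<le> Im (p s)) \<or> (\<forall>s\<in>{u..b}. Im (p s) \<le> 0)"
  proof (rule ccontr)
    assume "\<not> ?thesis"
    then obtain s1 s2 where s1: "s1 \<in> {u..b}" "Im (p s1) < 0" and s2: "s2 \<in> {u..b}" "0 < Im (p s2)"
      by (meson not_le)
    have "s1 \<noteq> u" "s1 \<noteq> b" using s1 Imu Imb by auto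
    then have s1': "u < s1" "s1 < b" using s1(1) by auto
    have "s2 \<noteq> u" "s2 \<noteq> b" using s2 Imu Imb by auto
    then have s2': "u < s2" "s2 < b" using s2(1) by auto
    define lo where "lo = min s1 s2"
    define hi where "hi = max s1 s2"
    have cI: "continuous_on {lo..hi} (\<lambda>s. Im (p s))"
      by (rule continuous_on_Im[OF continuous_on_subset[OF cpub]]) (use s1' s2' in \<open>auto simp: lo_def hi_def\<close>)
    have conn: "connected ((\<lambda>s. Im (p s)) ` {lo..hi})"
      by (rule connected_continuous_image[OF cI]) simp
    have m1: "s1 \<in> {lo..hi}" "s2 \<in> {lo..hi}" unfolding lo_def hi_def by auto
    have i1: "Im (p s1) \<in> (\<lambda>s. Im (p s)) ` {lo..hi}" using m1(1) by blast
    have i2: "Im (p s2) \<in> (\<lambda>s. Im (p s)) ` {lo..hi}" using m1(2) by blast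
    have "0 \<in> (\<lambda>s. Im (p s)) ` {lo..hi}"
      by (rule connectedD_interval[OF conn i1 i2 less_imp_le[OF s1(2)] less_imp_le[OF s2(2)]])
    then obtain x where x: "0 = Im (p x)" "x \<in> {lo..hi}" by (rule imageE)
    have "u < lo" "hi < b" using s1' s2' by (simp_all add: lo_def hi_def)
    moreover have "lo \<le> x" "x \<le> hi" using x(2) by simp_all
    ultimately have "u < x" "x < b" by linarith+
    then show False using nz[of x] x(1) by simp
  qed
  have Reub: "Re (p u) < Re (p b)" using Reu Reb by simp
  from sign show False
  proof
    assume pos: "\<forall>s\<in>{u..b}. 0 \<le> Im (p s)"
    obtain s where "s \<in> {u..b}" "Im (q s) = 0 \<and> 0 < Re (q s)"
      using core[OF ublt derub cqub qnzub injub Imu Imb Reub] pos by blast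
    then show False using nohit sub by blast
  next
    assume neg: "\<forall>s\<in>{u..b}. Im (p s) \<le> 0"
    have der': "\<And>s. s \<in> {u..b} \<Longrightarrow> ((\<lambda>s. cnj (p s)) has_vector_derivative cnj (q s)) (at s within {u..b})"
      using derub has_vector_derivative_cnj by blast
    have cq': "continuous_on {u..b} (\<lambda>s. cnj (q s))" by (intro continuous_intros cqub)
    have inj': "inj_on (\<lambda>s. cnj (p s)) {u..b}" using injub by (auto simp: inj_on_def)
    have "\<exists>s\<in>{u..b}. Im (cnj (q s)) = 0 \<and> 0 < Re (cnj (q s))"
    proof (rule core[OF ublt der' cq' _ inj'])
      show "\<And>s. s \<in> {u..b} \<Longrightarrow> cnj (q s) \<noteq> 0" using qnzub by simp
      show "Im (cnj (p u)) = 0" "Im (cnj (p b)) = 0" using Imu Imb by simp_all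
      show "Re (cnj (p u)) < Re (cnj (p b))" using Reub by simp
      show "\<And>s. s \<in> {u..b} \<Longrightarrow> 0 \<le> Im (cnj (p s))" using neg by simp
    qed
    then obtain s where "s \<in> {u..b}" "Im (q s) = 0" "0 < Re (q s)" by auto
    then show False using nohit sub by auto
  qed
qed


lemma norm2: "norm (v::real^2) = sqrt ((v$1)^2 + (v$2)^2)"
  by (simp add: norm_vec_def L2_set_def UNIV_2)

lemma cmod_lin: "cmod (Complex (v$1) (v$2)) = norm (v::real^2)"
  by (simp add: norm2 cmod_def)

lemma bl_lin: "bounded_linear (\<lambda>v::real^2. Complex (v$1) (v$2))"
  by (rule bounded_linear_intro[where K=1]) (simp_all add: complex_eq_iff cmod_lin)

theorem lemma1:
  fixes L :: real and r :: "real \<Rightarrow> real^2"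
  assumes "L > 1"
    and "smooth_curve_on 0 L r"
    and "\<forall>s\<in>{0..L}. norm (vector_derivative r (at s within {0..L})) = 1"
    and "r 0 = vector [0, 0]"
    and "r L = vector [1, 0]"
    and "\<not> (\<exists>s\<in>{0..L}. vector_derivative r (at s within {0..L}) = vector [1, 0])"
  shows "\<exists>s1\<in>{0..L}. \<exists>s2\<in>{0..L}. s1 \<noteq> s2 \<and> r s1 = r s2"
proof (rule ccontr)
  assume nsi: "\<not> ?thesis"
  have L0: "0 < L" using assms(1) by simp
  have inj: "inj_on r {0..L}" unfolding inj_on_def using nsi by blast
  obtain D :: "nat \<Rightarrow> real \<Rightarrow> real^2" where D0: "D 0 = r"
    and DD: "\<forall>n. \<forall>s\<in>{0..L}. (D n has_vector_derivative D (Suc n) s) (at s within {0..L})"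
    using assms(2) unfolding smooth_curve_on_def by blast
  have dr: "(r has_vector_derivative D 1 s) (at s within {0..L})" if "s \<in> {0..L}" for s
    using DD D0 that by (metis One_nat_def)
  have vd: "vector_derivative r (at s within {0..L}) = D 1 s" if "s \<in> {0..L}" for s
    using vector_derivative_within_cbox[of 0 L s r "D 1 s"] L0 that dr[OF that]
    by (simp add: cbox_interval)
  have cD1: "continuous_on {0..L} (D 1)"
    unfolding continuous_on_eq_continuous_within
    using DD has_vector_derivative_continuous by blast
  define lin where "lin v = Complex (v$1) (v$2)" for v :: "real^2"
  have bl: "bounded_linear lin" unfolding lin_def by (rule bl_lin)
  define p where "p s = lin (r s)" for s
  define q where "q s = lin (D 1 s)" for s
  have der: "(p has_vector_derivative q s) (at s within {0..L})" if "s \<in> {0..L}" for s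
    unfolding p_def q_def using bounded_linear.has_vector_derivative[OF bl dr[OF that]] .
  have cq: "continuous_on {0..L} q"
    unfolding q_def by (rule continuous_on_compose2[OF linear_continuous_on[OF bl] cD1, of UNIV]) simp_all
  have nq: "cmod (q s) = 1" if "s \<in> {0..L}" for s
    using assms(3) vd that by (simp add: q_def lin_def cmod_lin)
  have qnz: "q s \<noteq> 0" if "s \<in> {0..L}" for s using nq[OF that] by auto
  have injp: "inj_on p {0..L}"
    unfolding inj_on_def
  proof (intro ballI impI)
    fix s t assume st: "s \<in> {0..L}" "t \<in> {0..L}" "p s = p t"
    then have "r s $ 1 = r t $ 1" "r s $ 2 = r t $ 2" by (simp_all add: p_def lin_def)
    then have "r s = r t" by (simp add: vec_eq_iff forall_2)
    then show "s = t" using inj st unfolding inj_on_def by blast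
  qed
  have p0: "p 0 = 0" using assms(4) by (simp add: p_def lin_def complex_eq_iff)
  have pL: "p L = 1" using assms(5) by (simp add: p_def lin_def complex_eq_iff)
  have nohit: "\<not> (Im (q s) = 0 \<and> 0 < Re (q s))" if "s \<in> {0..L}" for s
  proof
    assume h: "Im (q s) = 0 \<and> 0 < Re (q s)"
    then have c2: "D 1 s $ 2 = 0" and c1: "0 < D 1 s $ 1" by (simp_all add: q_def lin_def)
    have "norm (D 1 s) = 1" using assms(3) vd that by simp
    then have "sqrt ((D 1 s $ 1)^2) = 1" using c2 by (simp add: norm2)
    then have "D 1 s $ 1 = 1" using c1 by simp
    then have "D 1 s = vector [1, 0]" using c2 by (simp add: vec_eq_iff forall_2)
    then show False using assms(6) vd that by auto
  qed
  show False by (rule reduce[OF L0 der cq qnz injp p0 pL nohit])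
qed

end
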